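(* Let $(A;A^+)$ be an $\mathbb{F}_1$-algebra pair. Every projective $\mathbb{B}[A;A^+]$-module is isomorphic to $\mathbb{B}(M,\le)$ for some partially ordered $A$-module $(M,\le)$.
   Context: $(A;A^+)$: $A$ a commutative monoid with zero (multiplicative), $A^+\subseteq A$ a sharp submonoid containing $0$. $A$-modules are pointed sets with $A$-action ($0$ acts to the base point, base point fixed). $\mathbb{B}[A;A^+]$ is the idempotent semiring of finitely generated $A^+$-submodules of $A$ with $\vee$ = union and $+$ = elementwise product. A partially ordered $A$-module is an $A$-module with a partial order such that $fv\le gv$ whenever $f\in A^+g$, and $v\le w\Rightarrow fv\le fw$ for $f\in A$. $\mathbb{B}(M,\le)$ is the set of $A^+$-submodules of $M$ that are lower sets and are the downward closure of a finitely generated $A^+$-submodule, a $\mathbb{B}[A;A^+]$-module under union and elementwise multiplication. A module is projective if every surjection onto it has a section. *)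

theory Defs
  imports Main
begin

text \<open>A is the whole type 'a (a commutative monoid with zero); Ap is A+.\<close>

definition F1_pair :: "('a::{comm_monoid_mult, mult_zero}) set \<Rightarrow> bool" where
  "F1_pair Ap \<longleftrightarrow>
     1 \<in> Ap \<and> 0 \<in> Ap \<and> (\<forall>f\<in>Ap. \<forall>g\<in>Ap. f * g \<in> Ap) \<and>
     (\<forall>f\<in>Ap. \<forall>g\<in>Ap. f * g = 1 \<longrightarrow> f = 1 \<and> g = 1)"

definition fgA :: "'a::{comm_monoid_mult, mult_zero} set \<Rightarrow> 'a set \<Rightarrow> 'a set" where
  "fgA Ap G = insert 0 {f * g | f g. f \<in> Ap \<and> g \<in> G}"

text \<open>The idempotent semiring B[A;A+]: addition = union, multiplication = elementwise product.\<close>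
definition BA :: "'a::{comm_monoid_mult, mult_zero} set \<Rightarrow> 'a set set" where
  "BA Ap = {fgA Ap G | G. finite G}"

definition setmult :: "'a::{comm_monoid_mult, mult_zero} set \<Rightarrow> 'a set \<Rightarrow> 'a set" where
  "setmult S T = {s * t | s t. s \<in> S \<and> t \<in> T}"

record ('a, 'n) bmod =
  mcar :: "'n set"
  mjoin :: "'n \<Rightarrow> 'n \<Rightarrow> 'n"
  mzero :: "'n"
  mact :: "'a set \<Rightarrow> 'n \<Rightarrow> 'n"

definition is_bmod :: "'a::{comm_monoid_mult, mult_zero} set \<Rightarrow> ('a, 'n) bmod \<Rightarrow> bool" where
  "is_bmod Ap N \<longleftrightarrow>
     mzero N \<in> mcar N \<and>
     (\<forall>x\<in>mcar N. \<forall>y\<in>mcar N. mjoin N x y \<in> mcar N) \<and>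
     (\<forall>S\<in>BA Ap. \<forall>x\<in>mcar N. mact N S x \<in> mcar N) \<and>
     (\<forall>x\<in>mcar N. \<forall>y\<in>mcar N. \<forall>z\<in>mcar N. mjoin N (mjoin N x y) z = mjoin N x (mjoin N y z)) \<and>
     (\<forall>x\<in>mcar N. \<forall>y\<in>mcar N. mjoin N x y = mjoin N y x) \<and>
     (\<forall>x\<in>mcar N. mjoin N (mzero N) x = x) \<and>
     (\<forall>S\<in>BA Ap. \<forall>T\<in>BA Ap. \<forall>x\<in>mcar N. mact N (S \<union> T) x = mjoin N (mact N S x) (mact N T x)) \<and>
     (\<forall>S\<in>BA Ap. \<forall>x\<in>mcar N. \<forall>y\<in>mcar N. mact N S (mjoin N x y) = mjoin N (mact N S x) (mact N S y)) \<and>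
     (\<forall>S\<in>BA Ap. \<forall>T\<in>BA Ap. \<forall>x\<in>mcar N. mact N (setmult S T) x = mact N S (mact N T x)) \<and>
     (\<forall>x\<in>mcar N. mact N (fgA Ap {1}) x = x) \<and>
     (\<forall>x\<in>mcar N. mact N {0} x = mzero N) \<and>
     (\<forall>S\<in>BA Ap. mact N S (mzero N) = mzero N)"

definition bhom :: "'a::{comm_monoid_mult, mult_zero} set \<Rightarrow> ('a, 'n) bmod \<Rightarrow> ('a, 'm) bmod \<Rightarrow> ('n \<Rightarrow> 'm) \<Rightarrow> bool" where
  "bhom Ap N K h \<longleftrightarrow>
     (\<forall>x\<in>mcar N. h x \<in> mcar K) \<and>
     h (mzero N) = mzero K \<and>
     (\<forall>x\<in>mcar N. \<forall>y\<in>mcar N. h (mjoin N x y) = mjoin K (h x) (h y)) \<and>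
     (\<forall>S\<in>BA Ap. \<forall>x\<in>mcar N. h (mact N S x) = mact K S (h x))"

definition bmod_iso :: "'a::{comm_monoid_mult, mult_zero} set \<Rightarrow> ('a, 'n) bmod \<Rightarrow> ('a, 'm) bmod \<Rightarrow> bool" where
  "bmod_iso Ap N K \<longleftrightarrow> (\<exists>h. bhom Ap N K h \<and> bij_betw h (mcar N) (mcar K))"

text \<open>The source modules are taken
  with carriers in the type ('p => 'a set), which is large enough to contain the free
  module on the carrier of P (finitely supported functions to B[A;A+]).\<close>
definition projective :: "'a::{comm_monoid_mult, mult_zero} set \<Rightarrow> ('a, 'p) bmod \<Rightarrow> bool" where
  "projective Ap P \<longleftrightarrow> is_bmod Ap P \<and>
     (\<forall>(N :: ('a, 'p \<Rightarrow> 'a set) bmod) p.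
        is_bmod Ap N \<and> bhom Ap N P p \<and> p ` mcar N = mcar P \<longrightarrow>
        (\<exists>s. bhom Ap P N s \<and> (\<forall>x\<in>mcar P. p (s x) = x)))"

definition amod :: "'a::{comm_monoid_mult, mult_zero} itself \<Rightarrow> 'm set \<Rightarrow> 'm \<Rightarrow> ('a \<Rightarrow> 'm \<Rightarrow> 'm) \<Rightarrow> bool" where
  "amod _ M pt ac \<longleftrightarrow>
     pt \<in> M \<and> (\<forall>f. \<forall>x\<in>M. ac f x \<in> M) \<and>
     (\<forall>x\<in>M. ac 1 x = x) \<and> (\<forall>f g. \<forall>x\<in>M. ac (f * g) x = ac f (ac g x)) \<and>
     (\<forall>x\<in>M. ac 0 x = pt) \<and> (\<forall>f. ac f pt = pt)"

definition po_amod :: "'a::{comm_monoid_mult, mult_zero} set \<Rightarrow> 'm set \<Rightarrow> 'm \<Rightarrow> ('a \<Rightarrow> 'm \<Rightarrow> 'm) \<Rightarrow> ('m \<Rightarrow> 'm \<Rightarrow> bool) \<Rightarrow> bool" where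
  "po_amod Ap M pt ac le \<longleftrightarrow>
     amod TYPE('a) M pt ac \<and>
     (\<forall>x\<in>M. le x x) \<and>
     (\<forall>x\<in>M. \<forall>y\<in>M. le x y \<and> le y x \<longrightarrow> x = y) \<and>
     (\<forall>x\<in>M. \<forall>y\<in>M. \<forall>z\<in>M. le x y \<and> le y z \<longrightarrow> le x z) \<and>
     (\<forall>f g. \<forall>v\<in>M. (\<exists>h\<in>Ap. f = h * g) \<longrightarrow> le (ac f v) (ac g v)) \<and>
     (\<forall>f. \<forall>v\<in>M. \<forall>w\<in>M. le v w \<longrightarrow> le (ac f v) (ac f w))"

definition gen_sub :: "'a set \<Rightarrow> 'm \<Rightarrow> ('a \<Rightarrow> 'm \<Rightarrow> 'm) \<Rightarrow> 'm set \<Rightarrow> 'm set" where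
  "gen_sub Ap pt ac G = insert pt {ac h g | h g. h \<in> Ap \<and> g \<in> G}"

definition down :: "'m set \<Rightarrow> ('m \<Rightarrow> 'm \<Rightarrow> bool) \<Rightarrow> 'm set \<Rightarrow> 'm set" where
  "down M le S = {y \<in> M. \<exists>x\<in>S. le y x}"

definition BM :: "'a set \<Rightarrow> 'm set \<Rightarrow> 'm \<Rightarrow> ('a \<Rightarrow> 'm \<Rightarrow> 'm) \<Rightarrow> ('m \<Rightarrow> 'm \<Rightarrow> bool) \<Rightarrow> 'm set set" where
  "BM Ap M pt ac le =
     {S. S \<subseteq> M \<and> pt \<in> S \<and> (\<forall>h\<in>Ap. \<forall>x\<in>S. ac h x \<in> S) \<and>
         (\<forall>x\<in>S. \<forall>y\<in>M. le y x \<longrightarrow> y \<in> S) \<and>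
         (\<exists>G. finite G \<and> G \<subseteq> M \<and> S = down M le (gen_sub Ap pt ac G))}"

definition BM_mod :: "'a set \<Rightarrow> 'm set \<Rightarrow> 'm \<Rightarrow> ('a \<Rightarrow> 'm \<Rightarrow> 'm) \<Rightarrow> ('m \<Rightarrow> 'm \<Rightarrow> bool) \<Rightarrow> ('a, 'm set) bmod" where
  "BM_mod Ap M pt ac le =
     \<lparr> mcar = BM Ap M pt ac le,
       mjoin = (\<lambda>S T. S \<union> T),
       mzero = {pt},
       mact = (\<lambda>F S. down M le {ac f x | f x. f \<in> F \<and> x \<in> S}) \<rparr>"

end

theory Submission
  imports Defs
begin

lemma fgA_union: "fgA Ap (G \<union> H) = fgA Ap G \<union> fgA Ap H"
  unfolding fgA_def by auto

lemma fgA_empty: "fgA Ap {} = {0}"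
  unfolding fgA_def by auto

lemma fgA_in_BA: "finite G \<Longrightarrow> fgA Ap G \<in> BA Ap"
  unfolding BA_def by auto

locale bmP =
  fixes Ap :: "'a::{comm_monoid_mult, mult_zero} set" and P :: "('a,'p) bmod"
  assumes F1: "F1_pair Ap" and bm: "is_bmod Ap P"
begin

abbreviation "C \<equiv> mcar P"
abbreviation "J \<equiv> mjoin P"
abbreviation "Z \<equiv> mzero P"

definition ac :: "'a \<Rightarrow> 'p \<Rightarrow> 'p" where "ac f x = mact P (fgA Ap {f}) x"
definition le :: "'p \<Rightarrow> 'p \<Rightarrow> bool" where "le x y \<longleftrightarrow> J x y = y"

lemma Ap1: "1 \<in> Ap" and Ap0: "0 \<in> Ap" and Apm: "f \<in> Ap \<Longrightarrow> g \<in> Ap \<Longrightarrow> f * g \<in> Ap"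
  using F1 unfolding F1_pair_def by auto

lemma Z_in: "Z \<in> C" using bm unfolding is_bmod_def by meson
lemma J_in: "x \<in> C \<Longrightarrow> y \<in> C \<Longrightarrow> J x y \<in> C" using bm unfolding is_bmod_def by meson
lemma act_in: "S \<in> BA Ap \<Longrightarrow> x \<in> C \<Longrightarrow> mact P S x \<in> C" using bm unfolding is_bmod_def by meson
lemma J_assoc: "x \<in> C \<Longrightarrow> y \<in> C \<Longrightarrow> z \<in> C \<Longrightarrow> J (J x y) z = J x (J y z)"
  using bm unfolding is_bmod_def by meson
lemma J_comm: "x \<in> C \<Longrightarrow> y \<in> C \<Longrightarrow> J x y = J y x" using bm unfolding is_bmod_def by meson
lemma J_Z: "x \<in> C \<Longrightarrow> J Z x = x" using bm unfolding is_bmod_def by meson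
lemma act_union: "S \<in> BA Ap \<Longrightarrow> T \<in> BA Ap \<Longrightarrow> x \<in> C \<Longrightarrow> mact P (S \<union> T) x = J (mact P S x) (mact P T x)"
  using bm unfolding is_bmod_def by meson
lemma act_J: "S \<in> BA Ap \<Longrightarrow> x \<in> C \<Longrightarrow> y \<in> C \<Longrightarrow> mact P S (J x y) = J (mact P S x) (mact P S y)"
  using bm unfolding is_bmod_def by meson
lemma act_mult: "S \<in> BA Ap \<Longrightarrow> T \<in> BA Ap \<Longrightarrow> x \<in> C \<Longrightarrow> mact P (setmult S T) x = mact P S (mact P T x)"
  using bm unfolding is_bmod_def by meson
lemma act_one: "x \<in> C \<Longrightarrow> mact P (fgA Ap {1}) x = x" using bm unfolding is_bmod_def by meson
lemma act_zero: "x \<in> C \<Longrightarrow> mact P {0} x = Z" using bm unfolding is_bmod_def by meson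
lemma act_Z: "S \<in> BA Ap \<Longrightarrow> mact P S Z = Z" using bm unfolding is_bmod_def by meson

lemma J_idem: "x \<in> C \<Longrightarrow> J x x = x"
proof -
  assume x: "x \<in> C"
  have "mact P (fgA Ap {1} \<union> fgA Ap {1}) x = J x x"
    using act_union[OF fgA_in_BA fgA_in_BA x, of "{1}" "{1}"] act_one[OF x] by simp
  thus ?thesis using act_one[OF x] by simp
qed

lemma le_refl: "x \<in> C \<Longrightarrow> le x x" by (simp add: le_def J_idem)
lemma le_antisym: "x \<in> C \<Longrightarrow> y \<in> C \<Longrightarrow> le x y \<Longrightarrow> le y x \<Longrightarrow> x = y"
  by (metis le_def J_comm)
lemma le_trans: "x \<in> C \<Longrightarrow> y \<in> C \<Longrightarrow> z \<in> C \<Longrightarrow> le x y \<Longrightarrow> le y z \<Longrightarrow> le x z"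
  by (metis le_def J_assoc)
lemma Z_le: "x \<in> C \<Longrightarrow> le Z x" by (simp add: le_def J_Z)
lemma le_Z: "x \<in> C \<Longrightarrow> le x Z \<Longrightarrow> x = Z" by (metis le_antisym Z_le Z_in)
lemma le_J1: "x \<in> C \<Longrightarrow> y \<in> C \<Longrightarrow> le x (J x y)"
  by (metis le_def J_assoc J_idem)
lemma le_J2: "x \<in> C \<Longrightarrow> y \<in> C \<Longrightarrow> le y (J x y)"
  by (metis le_J1 J_comm)
lemma J_least: "x \<in> C \<Longrightarrow> y \<in> C \<Longrightarrow> v \<in> C \<Longrightarrow> le x v \<Longrightarrow> le y v \<Longrightarrow> le (J x y) v"
  by (metis le_def J_assoc)

lemma act_mono: "S \<in> BA Ap \<Longrightarrow> x \<in> C \<Longrightarrow> y \<in> C \<Longrightarrow> le x y \<Longrightarrow> le (mact P S x) (mact P S y)"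
  by (metis le_def act_J)
lemma act_sub: "S \<in> BA Ap \<Longrightarrow> T \<in> BA Ap \<Longrightarrow> S \<subseteq> T \<Longrightarrow> x \<in> C \<Longrightarrow> le (mact P S x) (mact P T x)"
  by (metis le_def act_union sup.absorb2)

lemma fgA1: "f \<in> fgA Ap {f}" unfolding fgA_def using Ap1 by force

lemma fgA_mult: "setmult (fgA Ap {f}) (fgA Ap {g}) = fgA Ap {f * g}"
  unfolding setmult_def fgA_def
proof (rule set_eqI, rule iffI)
  fix x assume "x \<in> {s * t |s t. s \<in> insert 0 {a * b |a b. a \<in> Ap \<and> b \<in> {f}} \<and> t \<in> insert 0 {a * b |a b. a \<in> Ap \<and> b \<in> {g}}}"
  then obtain s t where x: "x = s * t" and s: "s = 0 \<or> (\<exists>a\<in>Ap. s = a * f)" and t: "t = 0 \<or> (\<exists>a\<in>Ap. t = a * g)" by blast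
  show "x \<in> insert 0 {a * b |a b. a \<in> Ap \<and> b \<in> {f * g}}"
  proof (cases "s = 0 \<or> t = 0")
    case True thus ?thesis using x by auto
  next
    case False
    then obtain a b where "a \<in> Ap" "b \<in> Ap" "s = a * f" "t = b * g" using s t by blast
    hence "x = (a * b) * (f * g)" "a * b \<in> Ap" using x Apm by (auto simp: ac_simps)
    thus ?thesis by blast
  qed
next
  fix x assume "x \<in> insert 0 {a * b |a b. a \<in> Ap \<and> b \<in> {f * g}}"
  hence "x = 0 \<or> (\<exists>a\<in>Ap. x = a * (f * g))" by blast
  thus "x \<in> {s * t |s t. s \<in> insert 0 {a * b |a b. a \<in> Ap \<and> b \<in> {f}} \<and> t \<in> insert 0 {a * b |a b. a \<in> Ap \<and> b \<in> {g}}}"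
  proof
    assume "x = 0"
    hence "x = 0 * 0" by simp
    thus ?thesis by blast
  next
    assume "\<exists>a\<in>Ap. x = a * (f * g)"
    then obtain a where a: "a \<in> Ap" "x = a * (f * g)" by blast
    hence "x = (a * f) * (1 * g)" by (simp add: ac_simps)
    moreover have "a * f \<in> insert 0 {a * b |a b. a \<in> Ap \<and> b \<in> {f}}" using a by blast
    moreover have "1 * g \<in> insert 0 {a * b |a b. a \<in> Ap \<and> b \<in> {g}}" using Ap1 by blast
    ultimately show ?thesis by blast
  qed
qed

lemma fgA0: "fgA Ap {0} = {0}" unfolding fgA_def by auto

lemma ac_in: "x \<in> C \<Longrightarrow> ac f x \<in> C" unfolding ac_def by (simp add: act_in fgA_in_BA)
lemma ac_1: "x \<in> C \<Longrightarrow> ac 1 x = x" unfolding ac_def by (simp add: act_one)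
lemma ac_mult: "x \<in> C \<Longrightarrow> ac (f * g) x = ac f (ac g x)"
  unfolding ac_def by (metis act_mult fgA_in_BA fgA_mult finite.emptyI finite.insertI)
lemma ac_0: "x \<in> C \<Longrightarrow> ac 0 x = Z" unfolding ac_def by (simp add: fgA0 act_zero)
lemma ac_Z: "ac f Z = Z" unfolding ac_def by (simp add: act_Z fgA_in_BA)
lemma ac_J: "x \<in> C \<Longrightarrow> y \<in> C \<Longrightarrow> ac f (J x y) = J (ac f x) (ac f y)"
  unfolding ac_def by (simp add: act_J fgA_in_BA)
lemma ac_mono: "x \<in> C \<Longrightarrow> y \<in> C \<Longrightarrow> le x y \<Longrightarrow> le (ac f x) (ac f y)"
  unfolding ac_def by (simp add: act_mono fgA_in_BA)
lemma ac_dec: "a \<in> Ap \<Longrightarrow> x \<in> C \<Longrightarrow> le (ac (a * g) x) (ac g x)"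
proof -
  assume a: "a \<in> Ap" and x: "x \<in> C"
  have "fgA Ap {a * g} \<subseteq> fgA Ap {g}" unfolding fgA_def using a Apm by (force simp: mult.assoc)
  thus ?thesis unfolding ac_def using x by (simp add: act_sub fgA_in_BA)
qed
lemma ac_dec1: "a \<in> Ap \<Longrightarrow> x \<in> C \<Longrightarrow> le (ac a x) x"
  using ac_dec[of a x 1] ac_1 by simp

lemma po_sub:
  assumes "M \<subseteq> C" "Z \<in> M" "\<And>f x. x \<in> M \<Longrightarrow> ac f x \<in> M"
  shows "po_amod Ap M Z ac le"
  unfolding po_amod_def amod_def using assms
  apply (intro conjI ballI allI impI)
  apply (auto simp: ac_1 ac_mult ac_0 ac_Z intro: le_refl le_antisym ac_mono)
  apply (meson le_trans subsetD)
  using ac_dec subsetD apply blast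
  done

end


context bmP begin

definition islub :: "'p set \<Rightarrow> 'p \<Rightarrow> bool" where
  "islub S u \<longleftrightarrow> u \<in> C \<and> (\<forall>y\<in>S. le y u) \<and> (\<forall>v\<in>C. (\<forall>y\<in>S. le y v) \<longrightarrow> le u v)"

lemma islub_unique: "islub S u \<Longrightarrow> islub S v \<Longrightarrow> u = v"
  unfolding islub_def by (meson le_antisym)

lemma islub_Z: "islub {Z} Z"
  unfolding islub_def by (simp add: Z_in le_refl Z_le)

lemma islub_insert: "islub (insert Z G) u \<Longrightarrow> a \<in> C \<Longrightarrow> G \<subseteq> C \<Longrightarrow> islub (insert Z (insert a G)) (J a u)"
proof -
  assume u: "islub (insert Z G) u" and a: "a \<in> C" and GC: "G \<subseteq> C"
  have uC: "u \<in> C" using u islub_def by blast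
  show ?thesis unfolding islub_def
  proof (intro conjI ballI impI)
    show "J a u \<in> C" using J_in a uC by blast
  next
    fix y assume y: "y \<in> insert Z (insert a G)"
    show "le y (J a u)"
    proof (cases "y = a")
      case True thus ?thesis using le_J1 a uC by blast
    next
      case False
      hence "y \<in> insert Z G" using y by blast
      hence yu: "le y u" using u unfolding islub_def by blast
      have yC: "y \<in> C" using GC Z_in \<open>y \<in> insert Z G\<close> by blast
      show ?thesis using le_trans[OF yC uC J_in[OF a uC] yu le_J2[OF a uC]] .
    qed
  next
    fix v assume v: "v \<in> C" "\<forall>y\<in>insert Z (insert a G). le y v"
    hence "le u v" using u unfolding islub_def by blast
    moreover have "le a v" using v by blast
    ultimately show "le (J a u) v" using J_least a uC v by blast
  qed
qed

lemma islub_exists: "finite G \<Longrightarrow> G \<subseteq> C \<Longrightarrow> \<exists>u. islub (insert Z G) u"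
proof (induction G rule: finite_induct)
  case empty thus ?case using islub_Z by auto
next
  case (insert a G) thus ?case using islub_insert by blast
qed

lemma islub_union: "islub S u \<Longrightarrow> islub T v \<Longrightarrow> S \<subseteq> C \<Longrightarrow> T \<subseteq> C \<Longrightarrow> islub (S \<union> T) (J u v)"
proof -
  assume u: "islub S u" and v: "islub T v" and SC: "S \<subseteq> C" and TC: "T \<subseteq> C"
  have uC: "u \<in> C" and vC: "v \<in> C" using u v islub_def by auto
  show ?thesis unfolding islub_def
  proof (intro conjI ballI impI)
    show "J u v \<in> C" using J_in uC vC by blast
  next
    fix y assume "y \<in> S \<union> T"
    thus "le y (J u v)"
    proof
      assume "y \<in> S"
      hence "le y u" using u islub_def by blast
      thus ?thesis using le_trans[OF _ uC J_in[OF uC vC] _ le_J1[OF uC vC]] SC \<open>y \<in> S\<close> by blast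
    next
      assume "y \<in> T"
      hence "le y v" using v islub_def by blast
      thus ?thesis using le_trans[OF _ vC J_in[OF uC vC] _ le_J2[OF uC vC]] TC \<open>y \<in> T\<close> by blast
    qed
  next
    fix w assume w: "w \<in> C" "\<forall>y\<in>S \<union> T. le y w"
    hence "le u w" "le v w" using u v unfolding islub_def by auto
    thus "le (J u v) w" using J_least uC vC w by blast
  qed
qed

definition down :: "'p set \<Rightarrow> 'p set" where "down X = {y \<in> C. \<exists>x\<in>X. le y x}"

lemma down_eq: "down X = Defs.down C le X" unfolding down_def Defs.down_def by simp

lemma down_sup: "X \<subseteq> C \<Longrightarrow> X \<subseteq> down X" unfolding down_def using le_refl by blast
lemma down_sub: "down X \<subseteq> C" unfolding down_def by blast
lemma down_union: "down (X \<union> Y) = down X \<union> down Y" unfolding down_def by blast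
lemma down_dom: "X \<subseteq> C \<Longrightarrow> Y \<subseteq> C \<Longrightarrow> (\<And>x. x \<in> X \<Longrightarrow> \<exists>y\<in>Y. le x y) \<Longrightarrow> down X \<subseteq> down Y"
proof
  fix z assume XC: "X \<subseteq> C" and YC: "Y \<subseteq> C" and H: "\<And>x. x \<in> X \<Longrightarrow> \<exists>y\<in>Y. le x y" and z: "z \<in> down X"
  then obtain x where x: "z \<in> C" "x \<in> X" "le z x" unfolding down_def by blast
  then obtain y where y: "y \<in> Y" "le x y" using H by blast
  have "le z y" using le_trans[OF x(1) _ _ x(3) y(2)] x y XC YC by blast
  thus "z \<in> down Y" unfolding down_def using x y by blast
qed

lemma islub_down: "X \<subseteq> C \<Longrightarrow> islub (down X) u \<longleftrightarrow> islub X u"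
proof -
  assume XC: "X \<subseteq> C"
  have A: "(\<forall>y\<in>down X. le y v) \<longleftrightarrow> (\<forall>y\<in>X. le y v)" if v: "v \<in> C" for v
  proof
    assume "\<forall>y\<in>down X. le y v" thus "\<forall>y\<in>X. le y v" using down_sup[OF XC] by blast
  next
    assume H: "\<forall>y\<in>X. le y v"
    show "\<forall>y\<in>down X. le y v"
    proof
      fix y assume "y \<in> down X"
      then obtain x where x: "y \<in> C" "x \<in> X" "le y x" unfolding down_def by blast
      show "le y v" using le_trans[OF x(1) _ v x(3)] x H XC by blast
    qed
  qed
  show ?thesis unfolding islub_def using A by auto
qed

end


context bmP begin

lemma islub_hom:
  assumes "finite G" "G \<subseteq> C" "\<And>x. x \<in> C \<Longrightarrow> \<phi> x \<in> C" "\<phi> Z = Z"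
    "\<And>x y. x \<in> C \<Longrightarrow> y \<in> C \<Longrightarrow> \<phi> (J x y) = J (\<phi> x) (\<phi> y)"
  shows "islub (insert Z G) u \<Longrightarrow> islub (insert Z (\<phi> ` G)) (\<phi> u)"
  using assms(1,2)
proof (induction G arbitrary: u rule: finite_induct)
  case empty
  hence "u = Z" using islub_unique islub_Z by simp
  thus ?case using islub_Z assms(4) by simp
next
  case (insert a G)
  have aC: "a \<in> C" and GC: "G \<subseteq> C" using insert.prems by auto
  obtain u0 where u0: "islub (insert Z G) u0" using islub_exists insert.hyps(1) GC by blast
  have "islub (insert Z (insert a G)) (J a u0)" using islub_insert[OF u0 aC GC] .
  hence "u = J a u0" using islub_unique insert.prems(1) by blast
  moreover have u0C: "u0 \<in> C" using u0 islub_def by blast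
  ultimately have e: "\<phi> u = J (\<phi> a) (\<phi> u0)" using assms(5) aC by simp
  have IH: "islub (insert Z (\<phi> ` G)) (\<phi> u0)" using insert.IH[OF u0 GC] .
  have "\<phi> ` G \<subseteq> C" using GC assms(3) by blast
  hence "islub (insert Z (insert (\<phi> a) (\<phi> ` G))) (J (\<phi> a) (\<phi> u0))"
    using islub_insert[OF IH assms(3)[OF aC]] by blast
  thus ?case using e by simp
qed

lemma islub_sethom:
  assumes "finite G" "G \<subseteq> C"
    "\<And>x y. x \<in> C \<Longrightarrow> y \<in> C \<Longrightarrow> \<phi> (J x y) = \<phi> x \<union> \<phi> y"
  shows "islub (insert Z G) u \<Longrightarrow> \<phi> u = \<phi> Z \<union> \<Union> (\<phi> ` G)"
  using assms(1,2)
proof (induction G arbitrary: u rule: finite_induct)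
  case empty
  hence "u = Z" using islub_unique islub_Z by simp
  thus ?case by simp
next
  case (insert a G)
  have aC: "a \<in> C" and GC: "G \<subseteq> C" using insert.prems by auto
  obtain u0 where u0: "islub (insert Z G) u0" using islub_exists insert.hyps(1) GC by blast
  have "islub (insert Z (insert a G)) (J a u0)" using islub_insert[OF u0 aC GC] .
  hence "u = J a u0" using islub_unique insert.prems(1) by blast
  moreover have u0C: "u0 \<in> C" using u0 islub_def by blast
  ultimately have e: "\<phi> u = \<phi> a \<union> \<phi> u0" using assms(3) aC by simp
  have IH: "\<phi> u0 = \<phi> Z \<union> \<Union> (\<phi> ` G)" using insert.IH[OF u0 GC] .
  show ?case using e IH by auto
qed

lemma fgA_insert: "fgA Ap (insert h H) = fgA Ap {h} \<union> fgA Ap H"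
  using fgA_union[of Ap "{h}" H] by simp

lemma mact_lub: "finite H \<Longrightarrow> x \<in> C \<Longrightarrow> islub (insert Z ((\<lambda>h. ac h x) ` H)) (mact P (fgA Ap H) x)"
proof (induction H rule: finite_induct)
  case empty thus ?case by (simp add: fgA_empty act_zero islub_Z)
next
  case (insert h H)
  have x: "x \<in> C" by fact
  have "mact P (fgA Ap (insert h H)) x = J (ac h x) (mact P (fgA Ap H) x)"
    unfolding ac_def using fgA_insert[of h H] act_union[OF fgA_in_BA fgA_in_BA x, of "{h}" H] insert.hyps(1) by simp
  moreover have "(\<lambda>h. ac h x) ` H \<subseteq> C" using ac_in x by blast
  ultimately show ?case using islub_insert[OF insert.IH[OF x] ac_in[OF x]] by simp
qed

end


context bmP begin

lemma BA_elem: "F \<in> BA Ap \<Longrightarrow> \<exists>H. finite H \<and> F = fgA Ap H" unfolding BA_def by blast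

lemma fgA_cases: "f \<in> fgA Ap H \<Longrightarrow> f = 0 \<or> (\<exists>a\<in>Ap. \<exists>h\<in>H. f = a * h)"
  unfolding fgA_def by blast

lemma fgA_gen: "h \<in> H \<Longrightarrow> h \<in> fgA Ap H" unfolding fgA_def using Ap1 by force
lemma fgA_0: "0 \<in> fgA Ap H" unfolding fgA_def by blast

lemma ac_le_mact: "finite H \<Longrightarrow> f \<in> fgA Ap H \<Longrightarrow> x \<in> C \<Longrightarrow> le (ac f x) (mact P (fgA Ap H) x)"
proof -
  assume H: "finite H" and f: "f \<in> fgA Ap H" and x: "x \<in> C"
  have L: "islub (insert Z ((\<lambda>h. ac h x) ` H)) (mact P (fgA Ap H) x)" using mact_lub H x .
  from fgA_cases[OF f] show ?thesis
  proof
    assume "f = 0" thus ?thesis using x ac_0 Z_le L islub_def by auto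
  next
    assume "\<exists>a\<in>Ap. \<exists>h\<in>H. f = a * h"
    then obtain a h where a: "a \<in> Ap" "h \<in> H" "f = a * h" by blast
    have "le (ac h x) (mact P (fgA Ap H) x)" using L a islub_def by auto
    thus ?thesis using ac_dec[OF a(1) x, of h] a(3) le_trans ac_in x L islub_def by blast
  qed
qed

definition C0 :: "'p set set" where "C0 = {down (insert Z G) | G. finite G \<and> G \<subseteq> C}"
definition act0 :: "'a set \<Rightarrow> 'p set \<Rightarrow> 'p set" where
  "act0 F S = down {ac f x | f x. f \<in> F \<and> x \<in> S}"
definition N0 :: "('a, 'p set) bmod" where
  "N0 = \<lparr> mcar = C0, mjoin = (\<lambda>S T. S \<union> T), mzero = {Z}, mact = act0 \<rparr>"

lemma C0_sub: "S \<in> C0 \<Longrightarrow> S \<subseteq> C" unfolding C0_def using down_sub by blast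
lemma C0_Z: "S \<in> C0 \<Longrightarrow> Z \<in> S" unfolding C0_def down_def using Z_in le_refl by blast
lemma C0_down: "S \<in> C0 \<Longrightarrow> x \<in> S \<Longrightarrow> y \<in> C \<Longrightarrow> le y x \<Longrightarrow> y \<in> S"
proof -
  assume S: "S \<in> C0" and x: "x \<in> S" and y: "y \<in> C" "le y x"
  obtain G where G: "S = down (insert Z G)" "G \<subseteq> C" using S unfolding C0_def by blast
  obtain w where w: "w \<in> insert Z G" "le x w" "x \<in> C" using x G unfolding down_def by blast
  have "w \<in> C" using w G Z_in by blast
  hence "le y w" using le_trans[OF y(1) w(3) _ y(2) w(2)] by blast
  thus "y \<in> S" using G w y unfolding down_def by blast
qed
lemma C0_downeq: "S \<in> C0 \<Longrightarrow> down S = S"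
proof
  assume S: "S \<in> C0"
  show "down S \<subseteq> S"
  proof
    fix y assume "y \<in> down S"
    then obtain x where "y \<in> C" "x \<in> S" "le y x" unfolding down_def by blast
    thus "y \<in> S" using C0_down[OF S] by blast
  qed
  show "S \<subseteq> down S" using down_sup C0_sub[OF S] by blast
qed

lemma down_Z: "down {Z} = {Z}"
proof
  show "down {Z} \<subseteq> {Z}" unfolding down_def using le_Z by blast
  show "{Z} \<subseteq> down {Z}" unfolding down_def using Z_in le_refl by blast
qed

lemma C0_ZZ: "{Z} \<in> C0"
proof -
  have "{Z} = down (insert Z {})" using down_Z by simp
  thus ?thesis unfolding C0_def by blast
qed

lemma C0_union: "S \<in> C0 \<Longrightarrow> T \<in> C0 \<Longrightarrow> S \<union> T \<in> C0"
proof -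
  assume "S \<in> C0" "T \<in> C0"
  then obtain G H where "finite G" "G \<subseteq> C" "S = down (insert Z G)" "finite H" "H \<subseteq> C" "T = down (insert Z H)"
    unfolding C0_def by blast
  moreover have "insert Z G \<union> insert Z H = insert Z (G \<union> H)" by blast
  ultimately have "S \<union> T = down (insert Z (G \<union> H))" "finite (G \<union> H)" "G \<union> H \<subseteq> C"
    using down_union[of "insert Z G" "insert Z H"] by simp_all
  thus ?thesis unfolding C0_def by blast
qed

end


context bmP begin

lemma act0_C0: "F \<in> BA Ap \<Longrightarrow> S \<in> C0 \<Longrightarrow> act0 F S \<in> C0"
proof -
  assume F: "F \<in> BA Ap" and S: "S \<in> C0"
  then obtain H where H: "finite H" "F = fgA Ap H" using BA_elem by blast
  obtain G where G: "finite G" "G \<subseteq> C" "S = down (insert Z G)" using S unfolding C0_def by blast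
  define Y where "Y = (\<lambda>(h, g). ac h g) ` (H \<times> G)"
  have Yf: "finite Y" unfolding Y_def using H(1) G(1) by simp
  have YC: "Y \<subseteq> C" unfolding Y_def using G ac_in by auto
  define X where "X = {ac f x | f x. f \<in> F \<and> x \<in> S}"
  have XC: "X \<subseteq> C" unfolding X_def using S C0_sub ac_in by blast
  have "down X \<subseteq> down (insert Z Y)"
  proof (rule down_dom[OF XC])
    show "insert Z Y \<subseteq> C" using YC Z_in by blast
  next
    fix z assume "z \<in> X"
    then obtain f x where z: "z = ac f x" "f \<in> F" "x \<in> S" unfolding X_def by blast
    have xC: "x \<in> C" using z S C0_sub by blast
    show "\<exists>y\<in>insert Z Y. le z y"
    proof (cases "f = 0")
      case True
      hence "z = Z" using z ac_0[OF xC] by simp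
      thus ?thesis using le_refl[OF Z_in] by blast
    next
      case False
      then obtain a h where ah: "a \<in> Ap" "h \<in> H" "f = a * h" using fgA_cases[of f H] z(2) H(2) by blast
      from z(3) G(3) obtain w where w: "w \<in> insert Z G" "le x w" unfolding down_def by blast
      show ?thesis
      proof (cases "w = Z")
        case True
        hence "x = Z" using w(2) le_Z[OF xC] by simp
        hence "z = Z" using z ac_Z by simp
        thus ?thesis using le_refl[OF Z_in] by blast
      next
        case False
        hence wG: "w \<in> G" using w by auto
        have "le (ac f x) (ac h x)" using ac_dec[OF ah(1) xC] ah by simp
        moreover have "le (ac h x) (ac h w)" using ac_mono xC wG G w by blast
        moreover have wC: "w \<in> C" using wG G by blast
        ultimately have "le z (ac h w)" using z(1) le_trans[OF ac_in[OF xC] ac_in[OF xC] ac_in[OF wC]] by blast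
        moreover have "ac h w \<in> Y" unfolding Y_def using ah wG by force
        ultimately show ?thesis by blast
      qed
    qed
  qed
  moreover have "down (insert Z Y) \<subseteq> down X"
  proof -
    have "insert Z Y \<subseteq> X"
    proof
      fix y assume "y \<in> insert Z Y"
      thus "y \<in> X"
      proof
        assume "y = Z"
        hence "y = ac 0 Z" using ac_Z by simp
        moreover have "0 \<in> F" using H fgA_0 by blast
        moreover have "Z \<in> S" using S C0_Z by blast
        ultimately show ?thesis unfolding X_def by blast
      next
        assume "y \<in> Y"
        then obtain h g where "y = ac h g" "h \<in> H" "g \<in> G" unfolding Y_def by force
        moreover have "g \<in> S" using G \<open>g \<in> G\<close> down_sup[of "insert Z G"] Z_in by blast
        ultimately show ?thesis unfolding X_def using H fgA_gen by blast
      qed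
    qed
    thus ?thesis unfolding down_def by blast
  qed
  moreover have "act0 F S = down X" unfolding act0_def X_def by simp
  ultimately have "act0 F S = down (insert Z Y)" by (rule_tac equalityI) simp_all
  thus ?thesis unfolding C0_def using Yf YC by blast
qed

end


context bmP begin

lemma act0_union: "act0 (S \<union> T) X = act0 S X \<union> act0 T X"
  unfolding act0_def down_def by blast
lemma act0_join: "act0 S (X \<union> Y) = act0 S X \<union> act0 S Y"
  unfolding act0_def down_def by blast

lemma act0_mult: "S \<in> BA Ap \<Longrightarrow> T \<in> BA Ap \<Longrightarrow> X \<in> C0 \<Longrightarrow> act0 (setmult S T) X = act0 S (act0 T X)"
proof -
  assume X: "X \<in> C0"
  have XC: "X \<subseteq> C" using X C0_sub by blast
  define A where "A = {ac f x | f x. f \<in> setmult S T \<and> x \<in> X}"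
  define B0 where "B0 = {ac f x | f x. f \<in> T \<and> x \<in> X}"
  define B where "B = {ac f w | f w. f \<in> S \<and> w \<in> down B0}"
  have AC: "A \<subseteq> C" unfolding A_def using XC ac_in by blast
  have B0C: "B0 \<subseteq> C" unfolding B0_def using XC ac_in by blast
  have BC: "B \<subseteq> C" unfolding B_def using down_sub ac_in by blast
  have "A \<subseteq> B"
  proof
    fix z assume "z \<in> A"
    then obtain s t x where stx: "z = ac (s * t) x" "s \<in> S" "t \<in> T" "x \<in> X" unfolding A_def setmult_def by blast
    have xC: "x \<in> C" using stx XC by blast
    have "ac t x \<in> B0" unfolding B0_def using stx by blast
    hence "ac t x \<in> down B0" using down_sup[OF B0C] by blast
    moreover have "z = ac s (ac t x)" using stx ac_mult[OF xC] by simp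
    ultimately show "z \<in> B" unfolding B_def using stx by blast
  qed
  hence "down A \<subseteq> down B" unfolding down_def by blast
  moreover have "down B \<subseteq> down A"
  proof (rule down_dom[OF BC AC])
    fix z assume "z \<in> B"
    then obtain f w where fw: "z = ac f w" "f \<in> S" "w \<in> down B0" unfolding B_def by blast
    then obtain g x where gx: "w \<in> C" "le w (ac g x)" "g \<in> T" "x \<in> X" unfolding down_def B0_def by blast
    have xC: "x \<in> C" using gx XC by blast
    have "le z (ac f (ac g x))" using fw(1) ac_mono[OF gx(1) ac_in[OF xC] gx(2)] by simp
    moreover have "ac f (ac g x) = ac (f * g) x" using ac_mult[OF xC] by simp
    moreover have "f * g \<in> setmult S T" unfolding setmult_def using fw gx by blast
    ultimately have "le z (ac (f * g) x) \<and> ac (f * g) x \<in> A" unfolding A_def using gx by auto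
    thus "\<exists>y\<in>A. le z y" by blast
  qed
  moreover have "act0 (setmult S T) X = down A" unfolding act0_def A_def by simp
  moreover have "act0 S (act0 T X) = down B" unfolding act0_def B_def B0_def by simp
  ultimately show ?thesis by (rule_tac equalityI) simp_all
qed

end


context bmP begin

lemma act0_one: "X \<in> C0 \<Longrightarrow> act0 (fgA Ap {1}) X = X"
proof -
  assume X: "X \<in> C0"
  have XC: "X \<subseteq> C" using X C0_sub by blast
  define Y where "Y = {ac f x | f x. f \<in> fgA Ap {1} \<and> x \<in> X}"
  have o1: "(1::'a) \<in> fgA Ap {1}" using fgA_gen[of 1 "{1}"] by simp
  have "X \<subseteq> down Y"
  proof
    fix x assume x: "x \<in> X"
    hence xC: "x \<in> C" using XC by blast
    have "x = ac 1 x" using ac_1[OF xC] by simp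
    hence "x \<in> Y" unfolding Y_def using x o1 by blast
    thus "x \<in> down Y" unfolding down_def using xC le_refl[OF xC] by blast
  qed
  moreover have "down Y \<subseteq> X"
  proof
    fix z assume "z \<in> down Y"
    then obtain f x where z: "z \<in> C" "le z (ac f x)" "f \<in> fgA Ap {1}" "x \<in> X" unfolding down_def Y_def by blast
    have xC: "x \<in> C" using z XC by blast
    have "le (ac f x) x"
    proof (cases "f = 0")
      case True thus ?thesis using ac_0[OF xC] Z_le[OF xC] by simp
    next
      case False
      then obtain a where "a \<in> Ap" "f = a * 1" using fgA_cases[of f "{1}"] z(3) by blast
      thus ?thesis using ac_dec1[OF _ xC] by simp
    qed
    hence "le z x" using le_trans[OF z(1) ac_in[OF xC] xC z(2)] by blast
    thus "z \<in> X" using C0_down[OF X z(4) z(1)] by blast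
  qed
  moreover have "act0 (fgA Ap {1}) X = down Y" unfolding act0_def Y_def by simp
  ultimately show ?thesis by simp
qed

lemma act0_zero: "X \<in> C0 \<Longrightarrow> act0 {0} X = {Z}"
proof -
  assume X: "X \<in> C0"
  have "{ac f x | f x. f \<in> {0} \<and> x \<in> X} = {Z}"
  proof
    show "{ac f x | f x. f \<in> {0} \<and> x \<in> X} \<subseteq> {Z}" using C0_sub[OF X] ac_0 by blast
    have "Z = ac 0 Z" using ac_Z by simp
    thus "{Z} \<subseteq> {ac f x | f x. f \<in> {0} \<and> x \<in> X}" using C0_Z[OF X] by blast
  qed
  thus ?thesis unfolding act0_def using down_Z by simp
qed

lemma act0_Z: "S \<in> BA Ap \<Longrightarrow> act0 S {Z} = {Z}"
proof -
  assume S: "S \<in> BA Ap"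
  have "0 \<in> S" using BA_elem[OF S] fgA_0 by blast
  hence "{ac f x | f x. f \<in> S \<and> x \<in> {Z}} = {Z}" using ac_Z by auto
  thus ?thesis unfolding act0_def using down_Z by simp
qed

lemma C0_ZU: "S \<in> C0 \<Longrightarrow> {Z} \<union> S = S" using C0_Z by blast

lemma N0_bmod: "is_bmod Ap N0"
  unfolding is_bmod_def N0_def bmod.simps
  apply (intro conjI ballI)
  subgoal by (rule C0_ZZ)
  subgoal by (rule C0_union)
  subgoal by (rule act0_C0)
  subgoal by (rule Un_assoc)
  subgoal by (rule Un_commute)
  subgoal by (rule C0_ZU)
  subgoal by (rule act0_union)
  subgoal by (rule act0_join)
  subgoal by (rule act0_mult)
  subgoal by (rule act0_one)
  subgoal by (rule act0_zero)
  subgoal by (rule act0_Z)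
  done

end


context bmP begin

definition pi :: "'p set \<Rightarrow> 'p" where "pi S = (THE u. islub S u)"

lemma pi_eq: "islub S u \<Longrightarrow> pi S = u"
  unfolding pi_def by (rule the_equality) (auto intro: islub_unique)

lemma C0_lub: "S \<in> C0 \<Longrightarrow> \<exists>G. finite G \<and> G \<subseteq> C \<and> S = down (insert Z G) \<and> islub S (pi S) \<and> islub (insert Z G) (pi S)"
proof -
  assume "S \<in> C0"
  then obtain G where G: "finite G" "G \<subseteq> C" "S = down (insert Z G)" unfolding C0_def by blast
  obtain u where u: "islub (insert Z G) u" using islub_exists G by blast
  have IC: "insert Z G \<subseteq> C" using G(2) Z_in by blast
  have "islub S u" using islub_down[OF IC] u G(3) by simp
  hence "pi S = u" by (rule pi_eq)
  thus ?thesis using G u \<open>islub S u\<close> by blast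
qed

lemma pi_lub: "S \<in> C0 \<Longrightarrow> islub S (pi S)" using C0_lub by blast

lemma pi_C: "S \<in> C0 \<Longrightarrow> pi S \<in> C" using pi_lub islub_def by blast

lemma pi_hom: "bhom Ap N0 P pi"
  unfolding bhom_def N0_def bmod.simps
proof (intro conjI ballI)
  fix x assume "x \<in> C0" thus "pi x \<in> C" by (rule pi_C)
next
  show "pi {Z} = Z" using pi_eq islub_Z by blast
next
  fix x y assume x: "x \<in> C0" and y: "y \<in> C0"
  have "islub (x \<union> y) (J (pi x) (pi y))"
    using islub_union[OF pi_lub[OF x] pi_lub[OF y] C0_sub[OF x] C0_sub[OF y]] .
  thus "pi (x \<union> y) = J (pi x) (pi y)" by (rule pi_eq)
next
  fix F S assume F: "F \<in> BA Ap" and S: "S \<in> C0"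
  obtain H where H: "finite H" "F = fgA Ap H" using BA_elem F by blast
  obtain G where G: "finite G" "G \<subseteq> C" "S = down (insert Z G)" "islub S (pi S)" "islub (insert Z G) (pi S)"
    using C0_lub S by blast
  define u where "u = pi S"
  have uC: "u \<in> C" using G(4) u_def islub_def by blast
  define X where "X = {ac f x | f x. f \<in> F \<and> x \<in> S}"
  have XC: "X \<subseteq> C" unfolding X_def using C0_sub[OF S] ac_in by blast
  have mC: "mact P F u \<in> C" using act_in F uC by blast
  have "islub X (mact P F u)"
    unfolding islub_def
  proof (intro conjI ballI impI)
    show "mact P F u \<in> C" by (rule mC)
  next
    fix y assume "y \<in> X"
    then obtain f x where y: "y = ac f x" "f \<in> F" "x \<in> S" unfolding X_def by blast
    have xC: "x \<in> C" using y C0_sub[OF S] by blast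
    have "le x u" using G(4) y(3) u_def unfolding islub_def by blast
    hence "le y (ac f u)" using ac_mono[OF xC uC] y(1) by blast
    moreover have "le (ac f u) (mact P F u)" using ac_le_mact[OF H(1) _ uC] y(2) H(2) by blast
    ultimately show "le y (mact P F u)" using le_trans[OF ac_in[OF xC] ac_in[OF uC] mC] y(1) by blast
  next
    fix v assume v: "v \<in> C" "\<forall>y\<in>X. le y v"
    have L: "islub (insert Z ((\<lambda>h. ac h u) ` H)) (mact P F u)" using mact_lub[OF H(1) uC] H(2) by simp
    have "\<forall>y\<in>insert Z ((\<lambda>h. ac h u) ` H). le y v"
    proof
      fix y assume "y \<in> insert Z ((\<lambda>h. ac h u) ` H)"
      thus "le y v"
      proof
        assume "y = Z" thus ?thesis using Z_le[OF v(1)] by simp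
      next
        assume "y \<in> (\<lambda>h. ac h u) ` H"
        then obtain h where h: "h \<in> H" "y = ac h u" by blast
        have Lh: "islub (insert Z (ac h ` G)) (ac h u)"
          using islub_hom[OF G(1) G(2), of "ac h" "pi S"] G(5) u_def ac_in ac_Z ac_J by simp
        have "\<forall>w\<in>insert Z (ac h ` G). le w v"
        proof
          fix w assume "w \<in> insert Z (ac h ` G)"
          thus "le w v"
          proof
            assume "w = Z" thus ?thesis using Z_le[OF v(1)] by simp
          next
            assume "w \<in> ac h ` G"
            then obtain g where g: "g \<in> G" "w = ac h g" by blast
            have "insert Z G \<subseteq> C" using G(2) Z_in by blast
            hence "g \<in> S" using G(3) g(1) down_sup[of "insert Z G"] by blast
            moreover have "h \<in> F" using h(1) H(2) fgA_gen by blast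
            ultimately have "w \<in> X" unfolding X_def using g(2) by blast
            thus ?thesis using v(2) by blast
          qed
        qed
        thus ?thesis using Lh h(2) v(1) unfolding islub_def by blast
      qed
    qed
    thus "le (mact P F u) v" using L v(1) unfolding islub_def by blast
  qed
  hence "islub (act0 F S) (mact P F u)" unfolding act0_def X_def[symmetric] using islub_down[OF XC] by simp
  thus "pi (act0 F S) = mact P F (pi S)" using pi_eq u_def by blast
qed

lemma pi_surj: "pi ` C0 = C"
proof
  show "pi ` C0 \<subseteq> C" using pi_C by blast
next
  show "C \<subseteq> pi ` C0"
  proof
    fix x assume x: "x \<in> C"
    define S where "S = down (insert Z {x})"
    have S: "S \<in> C0" unfolding C0_def S_def using x by blast
    have "islub (insert Z {x}) x" unfolding islub_def using x Z_le le_refl by auto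
    hence "islub S x" unfolding S_def using islub_down x Z_in by simp
    hence "pi S = x" by (rule pi_eq)
    thus "x \<in> pi ` C0" using S by blast
  qed
qed

end


definition emb :: "'p set \<Rightarrow> ('p \<Rightarrow> 'a set)" where "emb S = (\<lambda>p. if p \<in> S then UNIV else {})"
definition dec :: "('p \<Rightarrow> 'a set) \<Rightarrow> 'p set" where "dec T = {p. T p \<noteq> {}}"
lemma dec_emb: "dec (emb S) = S" unfolding dec_def emb_def by auto

definition tr :: "('a,'n) bmod \<Rightarrow> ('n \<Rightarrow> 'm) \<Rightarrow> ('m \<Rightarrow> 'n) \<Rightarrow> ('a,'m) bmod" where
  "tr N e d = \<lparr>mcar = e ` mcar N, mjoin = (\<lambda>a b. e (mjoin N (d a) (d b))), mzero = e (mzero N),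
     mact = (\<lambda>F a. e (mact N F (d a)))\<rparr>"

lemma tr_bmod:
  fixes Ap :: "'a::{comm_monoid_mult, mult_zero} set" and N :: "('a,'n) bmod"
  assumes B: "is_bmod Ap N" and de: "\<And>x. x \<in> mcar N \<Longrightarrow> d (e x) = x"
  shows "is_bmod Ap (tr N e d)"
proof -
  have h1: "mzero N \<in> mcar N" using B unfolding is_bmod_def by meson
  have h2: "\<And>x y. x \<in> mcar N \<Longrightarrow> y \<in> mcar N \<Longrightarrow> mjoin N x y \<in> mcar N" using B unfolding is_bmod_def by meson
  have h3: "\<And>S x. S \<in> BA Ap \<Longrightarrow> x \<in> mcar N \<Longrightarrow> mact N S x \<in> mcar N" using B unfolding is_bmod_def by meson
  have h4: "\<And>x y z. x \<in> mcar N \<Longrightarrow> y \<in> mcar N \<Longrightarrow> z \<in> mcar N \<Longrightarrow> mjoin N (mjoin N x y) z = mjoin N x (mjoin N y z)"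
    using B unfolding is_bmod_def by meson
  have h5: "\<And>x y. x \<in> mcar N \<Longrightarrow> y \<in> mcar N \<Longrightarrow> mjoin N x y = mjoin N y x" using B unfolding is_bmod_def by meson
  have h6: "\<And>x. x \<in> mcar N \<Longrightarrow> mjoin N (mzero N) x = x" using B unfolding is_bmod_def by meson
  have h7: "\<And>S T x. S \<in> BA Ap \<Longrightarrow> T \<in> BA Ap \<Longrightarrow> x \<in> mcar N \<Longrightarrow> mact N (S \<union> T) x = mjoin N (mact N S x) (mact N T x)"
    using B unfolding is_bmod_def by meson
  have h8: "\<And>S x y. S \<in> BA Ap \<Longrightarrow> x \<in> mcar N \<Longrightarrow> y \<in> mcar N \<Longrightarrow> mact N S (mjoin N x y) = mjoin N (mact N S x) (mact N S y)"
    using B unfolding is_bmod_def by meson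
  have h9: "\<And>S T x. S \<in> BA Ap \<Longrightarrow> T \<in> BA Ap \<Longrightarrow> x \<in> mcar N \<Longrightarrow> mact N (setmult S T) x = mact N S (mact N T x)"
    using B unfolding is_bmod_def by meson
  have h10: "\<And>x. x \<in> mcar N \<Longrightarrow> mact N (fgA Ap {1}) x = x" using B unfolding is_bmod_def by meson
  have h11: "\<And>x. x \<in> mcar N \<Longrightarrow> mact N {0} x = mzero N" using B unfolding is_bmod_def by meson
  have h12: "\<And>S. S \<in> BA Ap \<Longrightarrow> mact N S (mzero N) = mzero N" using B unfolding is_bmod_def by meson
  show ?thesis
    unfolding is_bmod_def tr_def bmod.simps
    apply (intro conjI ballI)
    subgoal using h1 by blast
    subgoal by (elim imageE) (simp add: de h2)
    subgoal by (elim imageE) (simp add: de h3)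
    subgoal by (elim imageE) (simp add: de h2 h4)
    subgoal by (elim imageE) (simp add: de h5)
    subgoal by (elim imageE) (simp add: de h1 h6)
    subgoal by (elim imageE) (simp add: de h3 h7)
    subgoal by (elim imageE) (simp add: de h2 h3 h8)
    subgoal by (elim imageE) (simp add: de h3 h9)
    subgoal by (elim imageE) (simp add: de h10)
    subgoal by (elim imageE) (simp add: de h11)
    subgoal by (simp add: de h1 h12)
    done
qed

lemma tr_hom:
  assumes H: "bhom Ap N K p" and de: "\<And>x. x \<in> mcar N \<Longrightarrow> d (e x) = x" and B: "is_bmod Ap N"
  shows "bhom Ap (tr N e d) K (p \<circ> d)"
proof -
  have h1: "mzero N \<in> mcar N" using B unfolding is_bmod_def by meson
  have h2: "\<And>x y. x \<in> mcar N \<Longrightarrow> y \<in> mcar N \<Longrightarrow> mjoin N x y \<in> mcar N" using B unfolding is_bmod_def by meson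
  have h3: "\<And>S x. S \<in> BA Ap \<Longrightarrow> x \<in> mcar N \<Longrightarrow> mact N S x \<in> mcar N" using B unfolding is_bmod_def by meson
  have p1: "\<And>x. x \<in> mcar N \<Longrightarrow> p x \<in> mcar K" using H unfolding bhom_def by meson
  have p2: "p (mzero N) = mzero K" using H unfolding bhom_def by meson
  have p3: "\<And>x y. x \<in> mcar N \<Longrightarrow> y \<in> mcar N \<Longrightarrow> p (mjoin N x y) = mjoin K (p x) (p y)" using H unfolding bhom_def by meson
  have p4: "\<And>S x. S \<in> BA Ap \<Longrightarrow> x \<in> mcar N \<Longrightarrow> p (mact N S x) = mact K S (p x)" using H unfolding bhom_def by meson
  show ?thesis
    unfolding bhom_def tr_def bmod.simps comp_def
    apply (intro conjI ballI)
    subgoal by (elim imageE) (simp add: de p1)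
    subgoal by (simp add: de h1 p2)
    subgoal by (elim imageE) (simp add: de h2 p3)
    subgoal by (elim imageE) (simp add: de h3 p4)
    done
qed

lemma tr_surj:
  assumes S: "p ` mcar N = X" and de: "\<And>x. x \<in> mcar N \<Longrightarrow> d (e x) = x"
  shows "(p \<circ> d) ` mcar (tr N e d) = X"
proof -
  have "(p \<circ> d) ` mcar (tr N e d) = (p \<circ> d \<circ> e) ` mcar N" unfolding tr_def by (simp add: image_comp)
  also have "\<dots> = p ` mcar N" by (rule image_cong) (simp_all add: de)
  finally show ?thesis using S by simp
qed

lemma tr_sec:
  assumes H: "bhom Ap K (tr N e d) s" and de: "\<And>x. x \<in> mcar N \<Longrightarrow> d (e x) = x" and B: "is_bmod Ap N"
  shows "bhom Ap K N (d \<circ> s)"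
proof -
  have h1: "mzero N \<in> mcar N" using B unfolding is_bmod_def by meson
  have h2: "\<And>x y. x \<in> mcar N \<Longrightarrow> y \<in> mcar N \<Longrightarrow> mjoin N x y \<in> mcar N" using B unfolding is_bmod_def by meson
  have h3: "\<And>S x. S \<in> BA Ap \<Longrightarrow> x \<in> mcar N \<Longrightarrow> mact N S x \<in> mcar N" using B unfolding is_bmod_def by meson
  have s1: "\<And>x. x \<in> mcar K \<Longrightarrow> s x \<in> e ` mcar N" using H unfolding bhom_def tr_def bmod.simps by meson
  have s1': "\<And>x. x \<in> mcar K \<Longrightarrow> d (s x) \<in> mcar N" using s1 de by force
  have s2: "s (mzero K) = e (mzero N)" using H unfolding bhom_def tr_def bmod.simps by meson
  have s3: "\<And>x y. x \<in> mcar K \<Longrightarrow> y \<in> mcar K \<Longrightarrow> s (mjoin K x y) = e (mjoin N (d (s x)) (d (s y)))"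
    using H unfolding bhom_def tr_def bmod.simps by meson
  have s4: "\<And>S x. S \<in> BA Ap \<Longrightarrow> x \<in> mcar K \<Longrightarrow> s (mact K S x) = e (mact N S (d (s x)))"
    using H unfolding bhom_def tr_def bmod.simps by meson
  show ?thesis
    unfolding bhom_def comp_def
    apply (intro conjI ballI)
    subgoal by (rule s1')
    subgoal by (simp add: s2 de h1)
    subgoal by (simp add: s3 de h2 s1')
    subgoal by (simp add: s4 de h3 s1')
    done
qed


lemma iso_from_bij:
  assumes B: "is_bmod Ap P" and H: "bhom Ap P K \<Psi>" and bij: "bij_betw \<Psi> (mcar P) (mcar K)"
  shows "bmod_iso Ap K P"
proof -
  define h where "h = inv_into (mcar P) \<Psi>"
  have hb: "bij_betw h (mcar K) (mcar P)" unfolding h_def using bij_betw_inv_into[OF bij] .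
  have h1: "mzero P \<in> mcar P" using B unfolding is_bmod_def by meson
  have h2: "\<And>x y. x \<in> mcar P \<Longrightarrow> y \<in> mcar P \<Longrightarrow> mjoin P x y \<in> mcar P" using B unfolding is_bmod_def by meson
  have h3: "\<And>S x. S \<in> BA Ap \<Longrightarrow> x \<in> mcar P \<Longrightarrow> mact P S x \<in> mcar P" using B unfolding is_bmod_def by meson
  have p2: "\<Psi> (mzero P) = mzero K" using H unfolding bhom_def by meson
  have p3: "\<And>x y. x \<in> mcar P \<Longrightarrow> y \<in> mcar P \<Longrightarrow> \<Psi> (mjoin P x y) = mjoin K (\<Psi> x) (\<Psi> y)" using H unfolding bhom_def by meson
  have p4: "\<And>S x. S \<in> BA Ap \<Longrightarrow> x \<in> mcar P \<Longrightarrow> \<Psi> (mact P S x) = mact K S (\<Psi> x)" using H unfolding bhom_def by meson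
  have inj: "inj_on \<Psi> (mcar P)" using bij_betw_imp_inj_on[OF bij] .
  have hf: "\<And>x. x \<in> mcar P \<Longrightarrow> h (\<Psi> x) = x" unfolding h_def using inv_into_f_f[OF inj] by blast
  have fh: "\<And>a. a \<in> mcar K \<Longrightarrow> \<Psi> (h a) = a" unfolding h_def using bij unfolding bij_betw_def h_def by (simp add: f_inv_into_f)
  have hin: "\<And>a. a \<in> mcar K \<Longrightarrow> h a \<in> mcar P" using bij_betw_apply[OF hb] .
  have "bhom Ap K P h"
    unfolding bhom_def
  proof (intro conjI ballI)
    fix a assume "a \<in> mcar K" thus "h a \<in> mcar P" by (rule hin)
  next
    show "h (mzero K) = mzero P" using hf[OF h1] p2 by simp
  next
    fix a b assume a: "a \<in> mcar K" and b: "b \<in> mcar K"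
    have "mjoin K a b = \<Psi> (mjoin P (h a) (h b))" using p3[OF hin[OF a] hin[OF b]] fh a b by simp
    thus "h (mjoin K a b) = mjoin P (h a) (h b)" using hf h2 hin a b by simp
  next
    fix S a assume S: "S \<in> BA Ap" and a: "a \<in> mcar K"
    have "mact K S a = \<Psi> (mact P S (h a))" using p4[OF S hin[OF a]] fh a by simp
    thus "h (mact K S a) = mact P S (h a)" using hf h3 hin a S by simp
  qed
  thus ?thesis unfolding bmod_iso_def using hb by blast
qed

context bmP begin

lemma finite_max: "finite G \<Longrightarrow> G \<subseteq> C \<Longrightarrow> g \<in> G \<Longrightarrow> \<exists>m\<in>G. le g m \<and> (\<forall>m'\<in>G. le m m' \<longrightarrow> m' = m)"
proof (induction G arbitrary: g rule: finite_induct)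
  case empty thus ?case by simp
next
  case (insert a G)
  have aC: "a \<in> C" and GC: "G \<subseteq> C" using insert.prems by auto
  show ?case
  proof (cases "g = a")
    case True
    show ?thesis
    proof (cases "\<exists>m\<in>G. le a m")
      case True
      then obtain m0 where m0: "m0 \<in> G" "le a m0" by blast
      obtain m where m: "m \<in> G" "le m0 m" "\<forall>m'\<in>G. le m m' \<longrightarrow> m' = m" using insert.IH[OF GC m0(1)] by blast
      have mC: "m \<in> C" "m0 \<in> C" using m m0 GC by auto
      have am: "le a m" using le_trans[OF aC mC(2) mC(1) m0(2) m(2)] .
      have "\<forall>m'\<in>insert a G. le m m' \<longrightarrow> m' = m"
      proof
        fix m' assume "m' \<in> insert a G"
        thus "le m m' \<longrightarrow> m' = m"
        proof
          assume "m' = a" thus ?thesis using le_antisym[OF aC mC(1) am] by auto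
        next
          assume "m' \<in> G" thus ?thesis using m(3) by blast
        qed
      qed
      thus ?thesis using am m(1) \<open>g = a\<close> by blast
    next
      case False
      have "\<forall>m'\<in>insert a G. le a m' \<longrightarrow> m' = a" using False by blast
      thus ?thesis using le_refl[OF aC] \<open>g = a\<close> by blast
    qed
  next
    case False
    hence gG: "g \<in> G" using insert.prems by blast
    obtain m where m: "m \<in> G" "le g m" "\<forall>m'\<in>G. le m m' \<longrightarrow> m' = m" using insert.IH[OF GC gG] by blast
    have mC: "m \<in> C" and gC: "g \<in> C" using m gG GC by auto
    show ?thesis
    proof (cases "le m a")
      case True
      have ga: "le g a" using le_trans[OF gC mC aC m(2) True] .
      have "\<forall>m'\<in>insert a G. le a m' \<longrightarrow> m' = a"
      proof
        fix m' assume "m' \<in> insert a G"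
        thus "le a m' \<longrightarrow> m' = a"
        proof
          assume "m' = a" thus ?thesis by simp
        next
          assume mG: "m' \<in> G"
          show ?thesis
          proof
            assume am': "le a m'"
            have m'C: "m' \<in> C" using mG GC by blast
            have "le m m'" using le_trans[OF mC aC m'C True am'] .
            hence "m' = m" using m(3) mG by blast
            thus "m' = a" using le_antisym[OF aC mC] am' True by simp
          qed
        qed
      qed
      thus ?thesis using ga by blast
    next
      case False
      have "\<forall>m'\<in>insert a G. le m m' \<longrightarrow> m' = m" using m(3) False by blast
      thus ?thesis using m(1,2) by blast
    qed
  qed
qed

end


locale bmS = bmP Ap P for Ap :: "'a::{comm_monoid_mult, mult_zero} set" and P :: "('a,'p) bmod" +
  fixes s :: "'p \<Rightarrow> 'p set"
  assumes s_hom: "bhom Ap P N0 s" and s_sec: "\<And>x. x \<in> C \<Longrightarrow> pi (s x) = x"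
begin

lemma sC0: "x \<in> C \<Longrightarrow> s x \<in> C0" using s_hom unfolding bhom_def N0_def bmod.simps by meson
lemma sZ: "s Z = {Z}" using s_hom unfolding bhom_def N0_def bmod.simps by meson
lemma sJ: "x \<in> C \<Longrightarrow> y \<in> C \<Longrightarrow> s (J x y) = s x \<union> s y" using s_hom unfolding bhom_def N0_def bmod.simps by meson
lemma sA: "S \<in> BA Ap \<Longrightarrow> x \<in> C \<Longrightarrow> s (mact P S x) = act0 S (s x)" using s_hom unfolding bhom_def N0_def bmod.simps by meson
lemma slub: "x \<in> C \<Longrightarrow> islub (s x) x"
proof -
  assume x: "x \<in> C"
  have "islub (s x) (pi (s x))" using pi_lub[OF sC0[OF x]] .
  thus ?thesis using s_sec[OF x] by simp
qed

definition M :: "'p set" where "M = {x \<in> C. x \<in> s x}"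

lemma MC: "M \<subseteq> C" unfolding M_def by blast

lemma F1: "x \<in> C \<Longrightarrow> y \<in> s x \<Longrightarrow> le y x \<and> y \<in> C"
proof -
  assume x: "x \<in> C" and y: "y \<in> s x"
  have "le y x" using slub[OF x] y unfolding islub_def by blast
  moreover have "y \<in> C" using C0_sub[OF sC0[OF x]] y by blast
  ultimately show ?thesis by blast
qed

lemma F2: "m \<in> M \<Longrightarrow> s m = {y \<in> C. le y m}"
proof
  assume m: "m \<in> M"
  hence mC: "m \<in> C" and ms: "m \<in> s m" unfolding M_def by auto
  show "s m \<subseteq> {y \<in> C. le y m}" using F1[OF mC] by blast
  show "{y \<in> C. le y m} \<subseteq> s m" using C0_down[OF sC0[OF mC] ms] by blast
qed

lemma ZM: "Z \<in> M" unfolding M_def using sZ Z_in by simp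

lemma acM: "x \<in> M \<Longrightarrow> ac f x \<in> M"
proof -
  assume x: "x \<in> M"
  hence xC: "x \<in> C" and xs: "x \<in> s x" unfolding M_def by auto
  have "s (ac f x) = act0 (fgA Ap {f}) (s x)" unfolding ac_def using sA[OF fgA_in_BA xC] by simp
  moreover have "ac f x \<in> act0 (fgA Ap {f}) (s x)"
    unfolding act0_def down_def using fgA1[of f] xs ac_in[OF xC] le_refl[OF ac_in[OF xC]] by blast
  ultimately show ?thesis unfolding M_def using ac_in[OF xC] by simp
qed

lemma s_lub_union: "finite G \<Longrightarrow> G \<subseteq> C \<Longrightarrow> islub (insert Z G) u \<Longrightarrow> s u = {Z} \<union> \<Union> (s ` G)"
proof -
  assume G: "finite G" "G \<subseteq> C" and u: "islub (insert Z G) u"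
  show ?thesis using islub_sethom[OF G sJ u] sZ by simp
qed

lemma claim1':
  assumes x: "x \<in> C" and G: "finite G" "G \<subseteq> C" "s x = down (insert Z G)" and g: "g \<in> G"
  shows "\<exists>m\<in>G \<inter> M. le g m"
proof -
  obtain m where m: "m \<in> G" "le g m" "\<forall>m'\<in>G. le m m' \<longrightarrow> m' = m" using finite_max[OF G(1,2) g] by blast
  have mC: "m \<in> C" using m G by blast
  have IC: "insert Z G \<subseteq> C" using G Z_in by blast
  have "m \<in> s x" using G(3) down_sup[OF IC] m(1) by blast
  have "islub (insert Z G) x" using slub[OF x] G(3) islub_down[OF IC] by simp
  hence su: "s x = {Z} \<union> \<Union> (s ` G)" using s_lub_union G by blast
  have "m \<in> M"
  proof (cases "m = Z")
    case True thus ?thesis using ZM by simp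
  next
    case False
    then obtain g' where g': "g' \<in> G" "m \<in> s g'" using su \<open>m \<in> s x\<close> by blast
    have g'C: "g' \<in> C" using g' G by blast
    have "le m g'" using F1[OF g'C g'(2)] by blast
    hence "g' = m" using m(3) g' by blast
    thus ?thesis unfolding M_def using g' mC by simp
  qed
  thus ?thesis using m by blast
qed

lemma claim1: "x \<in> C \<Longrightarrow> y \<in> s x \<Longrightarrow> \<exists>m\<in>M. m \<in> s x \<and> le y m"
proof -
  assume x: "x \<in> C" and y: "y \<in> s x"
  obtain G where G: "finite G" "G \<subseteq> C" "s x = down (insert Z G)" using sC0[OF x] unfolding C0_def by blast
  have IC: "insert Z G \<subseteq> C" using G Z_in by blast
  obtain w where w: "y \<in> C" "w \<in> insert Z G" "le y w" using y G(3) unfolding down_def by blast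
  show ?thesis
  proof (cases "w = Z")
    case True thus ?thesis using ZM C0_Z[OF sC0[OF x]] w by blast
  next
    case False
    hence wG: "w \<in> G" using w by blast
    obtain m where m: "m \<in> G \<inter> M" "le w m" using claim1'[OF x G wG] by blast
    have "m \<in> s x" using G(3) down_sup[OF IC] m(1) by blast
    moreover have "le y m" using le_trans[OF w(1) _ _ w(3) m(2)] wG G(2) m(1) MC by blast
    ultimately show ?thesis using m by blast
  qed
qed

end


context bmS begin

definition Psi :: "'p \<Rightarrow> 'p set" where "Psi x = s x \<inter> M"

lemma ac_le_self: "h \<in> Ap \<Longrightarrow> x \<in> C \<Longrightarrow> le (ac h x) x" by (rule ac_dec1)

lemma Psi_in: "x \<in> C \<Longrightarrow> Psi x \<in> BM Ap M Z ac le"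
proof -
  assume x: "x \<in> C"
  obtain G where G: "finite G" "G \<subseteq> C" "s x = down (insert Z G)" using sC0[OF x] unfolding C0_def by blast
  have IC: "insert Z G \<subseteq> C" using G Z_in by blast
  have sx: "s x \<in> C0" using sC0[OF x] .
  define G' where "G' = G \<inter> M"
  have G'f: "finite G'" "G' \<subseteq> M" unfolding G'_def using G(1) by auto
  have eq: "Psi x = Defs.down M le (gen_sub Ap Z ac G')"
  proof
    show "Psi x \<subseteq> Defs.down M le (gen_sub Ap Z ac G')"
    proof
      fix y assume y: "y \<in> Psi x"
      hence yM: "y \<in> M" and ys: "y \<in> s x" unfolding Psi_def by auto
      obtain w where w: "y \<in> C" "w \<in> insert Z G" "le y w" using ys G(3) unfolding down_def by blast
      show "y \<in> Defs.down M le (gen_sub Ap Z ac G')"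
      proof (cases "w = Z")
        case True
        have "Z \<in> gen_sub Ap Z ac G'" unfolding gen_sub_def by blast
        thus ?thesis unfolding Defs.down_def using yM w True by blast
      next
        case False
        hence wG: "w \<in> G" using w by blast
        obtain m where m: "m \<in> G \<inter> M" "le w m" using claim1'[OF x G wG] by blast
        have mC: "m \<in> C" using m MC by blast
        have "le y m" using le_trans[OF w(1) _ mC w(3) m(2)] wG G(2) by blast
        moreover have "m = ac 1 m" using ac_1[OF mC] by simp
        hence "m \<in> gen_sub Ap Z ac G'" unfolding gen_sub_def G'_def using m Ap1 by blast
        ultimately show ?thesis unfolding Defs.down_def using yM by blast
      qed
    qed
  next
    show "Defs.down M le (gen_sub Ap Z ac G') \<subseteq> Psi x"
    proof
      fix y assume "y \<in> Defs.down M le (gen_sub Ap Z ac G')"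
      then obtain w where y: "y \<in> M" "w \<in> gen_sub Ap Z ac G'" "le y w" unfolding Defs.down_def by blast
      have yC: "y \<in> C" using y MC by blast
      have "y \<in> s x"
      proof (cases "w = Z")
        case True
        hence "y = Z" using le_Z[OF yC] y(3) by simp
        thus ?thesis using C0_Z[OF sx] by simp
      next
        case False
        then obtain h g where hg: "h \<in> Ap" "g \<in> G'" "w = ac h g" using y(2) unfolding gen_sub_def by blast
        have gC: "g \<in> C" using hg G'_def G by blast
        have gs: "g \<in> s x" using hg(2) G'_def G(3) down_sup[OF IC] by blast
        have "le w g" using ac_dec1[OF hg(1) gC] hg(3) by simp
        hence "le y g" using le_trans[OF yC ac_in[OF gC] gC] y(3) hg(3) by blast
        thus ?thesis using C0_down[OF sx gs yC] by blast
      qed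
      thus "y \<in> Psi x" unfolding Psi_def using y(1) by blast
    qed
  qed
  have c1: "Psi x \<subseteq> M" unfolding Psi_def by blast
  have c2: "Z \<in> Psi x" unfolding Psi_def using C0_Z[OF sx] ZM by blast
  have c3: "\<forall>h\<in>Ap. \<forall>y\<in>Psi x. ac h y \<in> Psi x"
  proof (intro ballI)
    fix h y assume h: "h \<in> Ap" and y: "y \<in> Psi x"
    hence yM: "y \<in> M" and ys: "y \<in> s x" unfolding Psi_def by auto
    have yC: "y \<in> C" using yM MC by blast
    have "ac h y \<in> s x" using C0_down[OF sx ys ac_in[OF yC] ac_dec1[OF h yC]] .
    thus "ac h y \<in> Psi x" unfolding Psi_def using acM[OF yM] by blast
  qed
  have c4: "\<forall>y\<in>Psi x. \<forall>z\<in>M. le z y \<longrightarrow> z \<in> Psi x"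
  proof (intro ballI impI)
    fix y z assume y: "y \<in> Psi x" and z: "z \<in> M" "le z y"
    hence ys: "y \<in> s x" unfolding Psi_def by auto
    have "z \<in> s x" using C0_down[OF sx ys _ z(2)] z(1) MC by blast
    thus "z \<in> Psi x" unfolding Psi_def using z by blast
  qed
  show ?thesis unfolding BM_def using c1 c2 c3 c4 eq G'f by blast
qed

lemma s_rep: "x \<in> C \<Longrightarrow> s x = {z \<in> C. \<exists>m\<in>Psi x. le z m}"
proof
  assume x: "x \<in> C"
  show "s x \<subseteq> {z \<in> C. \<exists>m\<in>Psi x. le z m}"
  proof
    fix z assume z: "z \<in> s x"
    obtain m where "m \<in> M" "m \<in> s x" "le z m" using claim1[OF x z] by blast
    moreover have "z \<in> C" using F1[OF x z] by blast
    ultimately show "z \<in> {z \<in> C. \<exists>m\<in>Psi x. le z m}" unfolding Psi_def by blast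
  qed
  show "{z \<in> C. \<exists>m\<in>Psi x. le z m} \<subseteq> s x"
  proof
    fix z assume "z \<in> {z \<in> C. \<exists>m\<in>Psi x. le z m}"
    then obtain m where "z \<in> C" "m \<in> s x" "le z m" unfolding Psi_def by blast
    thus "z \<in> s x" using C0_down[OF sC0[OF x]] by blast
  qed
qed

lemma Psi_inj: "inj_on Psi C"
proof (rule inj_onI)
  fix x y assume x: "x \<in> C" and y: "y \<in> C" and e: "Psi x = Psi y"
  have "s x = s y" using s_rep[OF x] s_rep[OF y] e by simp
  thus "x = y" using s_sec[OF x] s_sec[OF y] by metis
qed

lemma Psi_surj: "Psi ` C = BM Ap M Z ac le"
proof
  show "Psi ` C \<subseteq> BM Ap M Z ac le" using Psi_in by blast
next
  show "BM Ap M Z ac le \<subseteq> Psi ` C"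
  proof
    fix D assume "D \<in> BM Ap M Z ac le"
    then obtain G where G: "finite G" "G \<subseteq> M" "D = Defs.down M le (gen_sub Ap Z ac G)" unfolding BM_def by blast
    have GC: "G \<subseteq> C" using G MC by blast
    obtain u where u: "islub (insert Z G) u" using islub_exists[OF G(1) GC] by blast
    have uC: "u \<in> C" using u islub_def by blast
    have su: "s u = {Z} \<union> \<Union> (s ` G)" using s_lub_union[OF G(1) GC u] .
    have "Psi u = D"
    proof
      show "Psi u \<subseteq> D"
      proof
        fix y assume "y \<in> Psi u"
        hence yM: "y \<in> M" and ys: "y \<in> s u" unfolding Psi_def by auto
        have yC: "y \<in> C" using yM MC by blast
        show "y \<in> D"
        proof (cases "y = Z")
          case True
          have "Z \<in> gen_sub Ap Z ac G" unfolding gen_sub_def by blast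
          thus ?thesis unfolding G(3) Defs.down_def using True yM le_refl[OF Z_in] by blast
        next
          case False
          then obtain g where g: "g \<in> G" "y \<in> s g" using ys su by blast
          have gM: "g \<in> M" using g G by blast
          have "le y g" using F2[OF gM] g(2) by blast
          moreover have "g = ac 1 g" using ac_1 gM MC by auto
          hence "g \<in> gen_sub Ap Z ac G" unfolding gen_sub_def using g(1) Ap1 by blast
          ultimately show ?thesis unfolding G(3) Defs.down_def using yM by blast
        qed
      qed
      show "D \<subseteq> Psi u"
      proof
        fix y assume "y \<in> D"
        then obtain w where y: "y \<in> M" "w \<in> gen_sub Ap Z ac G" "le y w" unfolding G(3) Defs.down_def by blast
        have yC: "y \<in> C" using y MC by blast
        have "y \<in> s u"
        proof (cases "w = Z")
          case True
          hence "y = Z" using le_Z[OF yC] y(3) by simp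
          thus ?thesis using su by simp
        next
          case False
          then obtain h g where hg: "h \<in> Ap" "g \<in> G" "w = ac h g" using y(2) unfolding gen_sub_def by blast
          have gM: "g \<in> M" using hg G by blast
          have gC: "g \<in> C" using gM MC by blast
          have "le w g" using ac_dec1[OF hg(1) gC] hg(3) by simp
          hence "le y g" using le_trans[OF yC ac_in[OF gC] gC] y(3) hg(3) by blast
          hence "y \<in> s g" using F2[OF gM] yC by blast
          thus ?thesis using su hg(2) by blast
        qed
        thus "y \<in> Psi u" unfolding Psi_def using y(1) by blast
      qed
    qed
    thus "D \<in> Psi ` C" using uC by blast
  qed
qed

lemma Psi_hom: "bhom Ap P (BM_mod Ap M Z ac le) Psi"
  unfolding bhom_def BM_mod_def bmod.simps
proof (intro conjI ballI)
  fix x assume "x \<in> C" thus "Psi x \<in> BM Ap M Z ac le" by (rule Psi_in)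
next
  show "Psi Z = {Z}" unfolding Psi_def using sZ ZM by blast
next
  fix x y assume x: "x \<in> C" and y: "y \<in> C"
  show "Psi (J x y) = Psi x \<union> Psi y" unfolding Psi_def using sJ[OF x y] by blast
next
  fix F x assume F: "F \<in> BA Ap" and x: "x \<in> C"
  have e1: "Psi (mact P F x) = down {ac f y | f y. f \<in> F \<and> y \<in> s x} \<inter> M"
    unfolding Psi_def sA[OF F x] act0_def by simp
  show "Psi (mact P F x) = Defs.down M le {ac f y | f y. f \<in> F \<and> y \<in> Psi x}"
    unfolding e1
  proof
    show "down {ac f y | f y. f \<in> F \<and> y \<in> s x} \<inter> M \<subseteq> Defs.down M le {ac f y | f y. f \<in> F \<and> y \<in> Psi x}"
    proof
      fix z assume "z \<in> down {ac f y | f y. f \<in> F \<and> y \<in> s x} \<inter> M"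
      then obtain f y where z: "z \<in> M" "z \<in> C" "le z (ac f y)" "f \<in> F" "y \<in> s x" unfolding down_def by blast
      obtain m where m: "m \<in> M" "m \<in> s x" "le y m" using claim1[OF x z(5)] by blast
      have yC: "y \<in> C" using F1[OF x z(5)] by blast
      have mC: "m \<in> C" using m MC by blast
      have "le (ac f y) (ac f m)" using ac_mono[OF yC mC m(3)] .
      hence "le z (ac f m)" using le_trans[OF z(2) ac_in[OF yC] ac_in[OF mC] z(3)] by blast
      moreover have "m \<in> Psi x" unfolding Psi_def using m by blast
      ultimately show "z \<in> Defs.down M le {ac f y | f y. f \<in> F \<and> y \<in> Psi x}"
        unfolding Defs.down_def using z(1,4) by blast
    qed
    show "Defs.down M le {ac f y | f y. f \<in> F \<and> y \<in> Psi x} \<subseteq> down {ac f y | f y. f \<in> F \<and> y \<in> s x} \<inter> M"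
    proof
      fix z assume "z \<in> Defs.down M le {ac f y | f y. f \<in> F \<and> y \<in> Psi x}"
      then obtain f y where z: "z \<in> M" "le z (ac f y)" "f \<in> F" "y \<in> Psi x" unfolding Defs.down_def by blast
      have "z \<in> C" using z MC by blast
      moreover have "y \<in> s x" using z(4) unfolding Psi_def by blast
      ultimately show "z \<in> down {ac f y | f y. f \<in> F \<and> y \<in> s x} \<inter> M"
        unfolding down_def using z by blast
    qed
  qed
qed

lemma result: "\<exists>(M :: 'p set) pt ac le. po_amod Ap M pt ac le \<and> bmod_iso Ap (BM_mod Ap M pt ac le) P"
proof -
  have "po_amod Ap M Z ac le" using po_sub[OF MC ZM acM] .
  moreover have "bmod_iso Ap (BM_mod Ap M Z ac le) P"
    using iso_from_bij[OF bm Psi_hom] Psi_inj Psi_surj unfolding bij_betw_def BM_mod_def by simp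
  ultimately show ?thesis by blast
qed

end


theorem mainTheorem15:
  fixes Ap :: "('a::{comm_monoid_mult, mult_zero}) set"
    and P :: "('a, 'p) bmod"
  assumes "F1_pair Ap"
    and "projective Ap P"
  shows "\<exists>(M :: 'p set) pt ac le. po_amod Ap M pt ac le \<and> bmod_iso Ap (BM_mod Ap M pt ac le) P"
proof -
  have B: "is_bmod Ap P" using assms(2) unfolding projective_def by blast
  interpret bmP Ap P using assms(1) B by unfold_locales
  define N :: "('a, 'p \<Rightarrow> 'a set) bmod" where "N = tr N0 emb dec"
  have de: "\<And>x. x \<in> mcar N0 \<Longrightarrow> dec ((emb :: 'p set \<Rightarrow> 'p \<Rightarrow> 'a set) x) = x" by (rule dec_emb)
  have NB: "is_bmod Ap N" unfolding N_def using tr_bmod[where d=dec and e="emb :: 'p set \<Rightarrow> 'p \<Rightarrow> 'a set", OF N0_bmod de] .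
  have Nh: "bhom Ap N P (pi \<circ> dec)" unfolding N_def using tr_hom[where d=dec and e="emb :: 'p set \<Rightarrow> 'p \<Rightarrow> 'a set", OF pi_hom de N0_bmod] .
  have ps: "pi ` mcar N0 = mcar P" using pi_surj unfolding N0_def by simp
  have Ns: "(pi \<circ> dec) ` mcar N = mcar P" unfolding N_def
    using tr_surj[where d=dec and e="emb :: 'p set \<Rightarrow> 'p \<Rightarrow> 'a set", OF ps de] .
  obtain s where s: "bhom Ap P N s" "\<forall>x\<in>mcar P. (pi \<circ> dec) (s x) = x"
    using assms(2) NB Nh Ns unfolding projective_def by blast
  have sh: "bhom Ap P N0 (dec \<circ> s)" using tr_sec[where d=dec and e="emb :: 'p set \<Rightarrow> 'p \<Rightarrow> 'a set", OF s(1)[unfolded N_def] de N0_bmod] .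
  interpret bmS Ap P "dec \<circ> s"
    by unfold_locales (use sh s(2) in auto)
  show ?thesis by (rule result)
qed


end
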